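(* Let $\mathcal{U},\mathcal{X}$ be Banach spaces with either $\mathcal{X}=\mathcal{U}^*$ or $\mathcal{U}=\mathcal{X}^*$, denote by $\langle\cdot,\cdot\rangle_{\mathcal{U},\mathcal{X}}$ the corresponding duality pairing, let $\mathcal{G}$ be a Hilbert space, $g^\delta\in\mathcal{G}$, and $K\in L(\mathcal{U},\mathcal{G})$ with an adjoint $K^*\in L(\mathcal{G},\mathcal{X})$ satisfying $(Ku,g)_\mathcal{G}=\langle u,K^*g\rangle_{\mathcal{U},\mathcal{X}}$ for all $u\in\mathcal{U}$, $g\in\mathcal{G}$. Let $\{\mathcal{R}_\alpha\}_{\alpha>0}$ be proper, convex, lower semicontinuous functionals $\mathcal{R}_\alpha:\mathcal{U}\to\mathbb{R}\cup\{+\infty\}$, let $G(g):=\frac12\|g-g^\delta\|_\mathcal{G}^2$, and $J_\alpha(u,g):=G(g)+\mathcal{R}_\alpha(u)$. Let $u_\alpha^\delta$ be a minimizer of $u\mapsto J_\alpha(u,Ku)$ over $\mathcal{U}$. Assume there is a family of functions $\phi_\alpha:\mathcal{U}\times\mathcal{U}\to[0,\infty)$ satisfying $$\lambda(1-\lambda)\phi_\alpha(u_1,u_2)\le\lambda\mathcal{R}_\alpha(u_1)+(1-\lambda)\mathcal{R}_\alpha(u_2)-\mathcal{R}_\alpha(\lambda u_1+(1-\lambda)u_2)$$ for all $u_1,u_2\in\mathcal{U}$, $\alpha>0$, $\lambda\in(0,1)$. Then every $v\in\mathcal{U}$ and $g^*\in\mathcal{G}$ satisfy $$\frac12\|K(u_\alpha^\delta-v)\|_\mathcal{G}^2+\phi_\alpha(u_\alpha^\delta,v)\le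 J_\alpha(v,Kv)-J_\alpha(u_\alpha^\delta,Ku_\alpha^\delta)\le\mathcal{R}_\alpha(v)+\mathcal{R}_\alpha^*(K^*g^* )+G(Kv)+G^*(-g^* ).$$
   Context: For a convex functional $F:\mathcal{U}\to\mathbb{R}\cup\{+\infty\}$, its Fenchel conjugate is defined on $\mathcal{X}$ by $F^*(x)=\sup_{u\in\mathcal{U}}\langle u,x\rangle_{\mathcal{U},\mathcal{X}}-F(u)$; for $G$ on the Hilbert space $\mathcal{G}$, $G^*(g^* )=\sup_{g\in\mathcal{G}}(g^*,g)_\mathcal{G}-G(g)$. *)

theory Defs
  imports "HOL-Analysis.Analysis"
begin

definition proper_fun :: "('u \<Rightarrow> ereal) \<Rightarrow> bool" where
  "proper_fun F \<longleftrightarrow> (\<forall>u. F u \<noteq> -\<infinity>) \<and> (\<exists>u. F u \<noteq> \<infinity>)"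

definition convex_fun :: "('u::real_vector \<Rightarrow> ereal) \<Rightarrow> bool" where
  "convex_fun F \<longleftrightarrow> (\<forall>u1 u2 (l::real). 0 \<le> l \<and> l \<le> 1 \<longrightarrow>
      F (l *\<^sub>R u1 + (1 - l) *\<^sub>R u2) \<le> ereal l * F u1 + ereal (1 - l) * F u2)"

definition lsc_fun :: "('u::topological_space \<Rightarrow> ereal) \<Rightarrow> bool" where
  "lsc_fun F \<longleftrightarrow> (\<forall>c. closed {u. F u \<le> c})"

text \<open>Duality pairing: P u x = <u,x>. "X = U^*": x \<mapsto> <.,x> is a linear isometric
  bijection from X onto the bounded linear functionals on U.\<close>
definition dual_of :: "('x::real_normed_vector \<Rightarrow> 'u::real_normed_vector \<Rightarrow> real) \<Rightarrow> bool" where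
  "dual_of P \<longleftrightarrow> (\<forall>x. bounded_linear (P x)) \<and> linear (\<lambda>x. Blinfun (P x)) \<and>
     bij (\<lambda>x. Blinfun (P x)) \<and> (\<forall>x. norm (Blinfun (P x)) = norm x)"

definition duality_pairing :: "('u::real_normed_vector \<Rightarrow> 'x::real_normed_vector \<Rightarrow> real) \<Rightarrow> bool" where
  "duality_pairing P \<longleftrightarrow> dual_of (\<lambda>x u. P u x) \<or> dual_of P"

definition fenchel :: "('u \<Rightarrow> 'x \<Rightarrow> real) \<Rightarrow> ('u \<Rightarrow> ereal) \<Rightarrow> 'x \<Rightarrow> ereal" where
  "fenchel P F x = (SUP u. ereal (P u x) - F u)"

definition fenchel_H :: "('g::real_inner \<Rightarrow> ereal) \<Rightarrow> 'g \<Rightarrow> ereal" where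
  "fenchel_H F gs = (SUP g. ereal (inner gs g) - F g)"

end

theory Submission
  imports Defs
begin

lemma sq_id: fixes x y :: "'a::real_inner" shows
 "(norm (l *\<^sub>R x + (1-l) *\<^sub>R y))\<^sup>2 = l * (norm x)\<^sup>2 + (1-l)*(norm y)\<^sup>2 - l*(1-l)*(norm (x-y))\<^sup>2"
  unfolding power2_norm_eq_inner
  by (simp add: inner_add_left inner_add_right inner_diff_left inner_diff_right inner_commute algebra_simps power2_eq_square)

theorem proposition2p2:
  fixes P :: "'u::banach \<Rightarrow> 'x::banach \<Rightarrow> real"
    and K :: "'u \<Rightarrow> 'g::{real_inner, complete_space}"
    and Kstar :: "'g \<Rightarrow> 'x"
    and gdelta :: 'g
    and R :: "real \<Rightarrow> 'u \<Rightarrow> ereal"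
    and phi :: "real \<Rightarrow> 'u \<Rightarrow> 'u \<Rightarrow> real"
    and G :: "'g \<Rightarrow> ereal"
    and J :: "real \<Rightarrow> 'u \<Rightarrow> 'g \<Rightarrow> ereal"
    and \<alpha> :: real and u v :: 'u and gs :: 'g
  assumes pairing: "duality_pairing P"
    and K_lin: "bounded_linear K"
    and Kstar_lin: "bounded_linear Kstar"
    and adjoint: "\<And>w g. inner (K w) g = P w (Kstar g)"
    and R_proper: "\<And>a. a > 0 \<Longrightarrow> proper_fun (R a)"
    and R_convex: "\<And>a. a > 0 \<Longrightarrow> convex_fun (R a)"
    and R_lsc: "\<And>a. a > 0 \<Longrightarrow> lsc_fun (R a)"
    and G_def: "\<And>g. G g = ereal ((1/2) * (norm (g - gdelta))\<^sup>2)"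
    and J_def: "\<And>a w g. J a w g = G g + R a w"
    and phi_nonneg: "\<And>a u1 u2. phi a u1 u2 \<ge> 0"
    and phi_ineq: "\<And>a u1 u2 l. a > 0 \<Longrightarrow> 0 < l \<Longrightarrow> l < 1 \<Longrightarrow>
        ereal (l * (1 - l) * phi a u1 u2) + R a (l *\<^sub>R u1 + (1 - l) *\<^sub>R u2)
          \<le> ereal l * R a u1 + ereal (1 - l) * R a u2"
    and alpha_pos: "\<alpha> > 0"
    and minimizer: "\<And>w. J \<alpha> u (K u) \<le> J \<alpha> w (K w)"
  shows "ereal ((1/2) * (norm (K (u - v)))\<^sup>2 + phi \<alpha> u v) \<le> J \<alpha> v (K v) - J \<alpha> u (K u)
     \<and> J \<alpha> v (K v) - J \<alpha> u (K u)
         \<le> R \<alpha> v + fenchel P (R \<alpha>) (Kstar gs) + G (K v) + fenchel_H G (- gs)"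
  proof -
  obtain w0 where w0: "R \<alpha> w0 \<noteq> \<infinity>" using R_proper[OF alpha_pos] unfolding proper_fun_def by blast
  have nm: "\<And>w. R \<alpha> w \<noteq> -\<infinity>" using R_proper[OF alpha_pos] unfolding proper_fun_def by blast
  have "J \<alpha> u (K u) \<le> J \<alpha> w0 (K w0)" by (rule minimizer)
  hence "R \<alpha> u \<noteq> \<infinity>" using w0 nm[of w0] unfolding J_def G_def by auto
  then obtain ru where ru: "R \<alpha> u = ereal ru" using nm[of u] by (cases "R \<alpha> u") auto
  define Gf where "Gf = (\<lambda>g. (1/2) * (norm (g - gdelta))\<^sup>2)"
  have Ju: "J \<alpha> u (K u) = ereal (Gf (K u) + ru)" unfolding J_def G_def Gf_def ru by simp
  have f1: "ereal (P u (Kstar gs) - ru) \<le> fenchel P (R \<alpha>) (Kstar gs)"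
    unfolding fenchel_def by (rule SUP_upper2[of u]) (auto simp: ru)
  have f2: "ereal (inner (- gs) (K u) - Gf (K u)) \<le> fenchel_H G (- gs)"
    unfolding fenchel_H_def by (rule SUP_upper2[of "K u"]) (auto simp: G_def Gf_def)
  have key: "P u (Kstar gs) - ru + (inner (- gs) (K u) - Gf (K u)) = - (Gf (K u) + ru)"
    using adjoint[of u gs] by (simp add: inner_commute)
  show ?thesis
  proof (cases "R \<alpha> v")
    case PInf
    have "J \<alpha> v (K v) = \<infinity>" unfolding J_def G_def PInf by simp
    moreover have "fenchel P (R \<alpha>) (Kstar gs) \<noteq> -\<infinity>" using f1 by auto
    moreover have "fenchel_H G (- gs) \<noteq> -\<infinity>" using f2 by auto
    ultimately show ?thesis using Ju PInf by (simp add: G_def)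
  next
    case MInf thus ?thesis using nm by auto
  next
    case (real rv)
    have Jv: "J \<alpha> v (K v) = ereal (Gf (K v) + rv)" unfolding J_def G_def Gf_def real by simp
    define q where "q = (1/2) * (norm (K (u - v)))\<^sup>2 + phi \<alpha> u v"
    have lin: "l * q \<le> (Gf (K v) + rv) - (Gf (K u) + ru)" if l: "0 < l" "l < 1" for l :: real
    proof -
      define w where "w = l *\<^sub>R u + (1 - l) *\<^sub>R v"
      have pi: "ereal (l * (1 - l) * phi \<alpha> u v) + R \<alpha> w \<le> ereal l * R \<alpha> u + ereal (1 - l) * R \<alpha> v"
        unfolding w_def by (rule phi_ineq[OF alpha_pos l])
      hence "R \<alpha> w \<noteq> \<infinity>" using ru real by auto
      then obtain rw where rw: "R \<alpha> w = ereal rw" using nm[of w] by (cases "R \<alpha> w") auto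
      from pi have pi': "l * (1 - l) * phi \<alpha> u v + rw \<le> l * ru + (1 - l) * rv" using ru real rw by simp
      have "J \<alpha> u (K u) \<le> J \<alpha> w (K w)" by (rule minimizer)
      hence m: "Gf (K u) + ru \<le> Gf (K w) + rw" using Ju rw unfolding J_def G_def Gf_def by simp
      have Kw: "K w - gdelta = l *\<^sub>R (K u - gdelta) + (1 - l) *\<^sub>R (K v - gdelta)"
      proof -
        have "K w = l *\<^sub>R K u + (1 - l) *\<^sub>R K v"
          unfolding w_def using K_lin by (simp add: linear_add[OF bounded_linear.linear[OF K_lin]] linear_scale[OF bounded_linear.linear[OF K_lin]])
        thus ?thesis by (simp add: algebra_simps)
      qed
      have Kd: "K (u - v) = (K u - gdelta) - (K v - gdelta)"
        by (simp add: linear_diff[OF bounded_linear.linear[OF K_lin]])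
      have gw: "Gf (K w) = l * Gf (K u) + (1 - l) * Gf (K v) - l * (1 - l) * ((1/2) * (norm (K (u - v)))\<^sup>2)"
        unfolding Gf_def Kw Kd sq_id by (simp add: field_simps)
      have "(1 - l) * (Gf (K u) + ru) + (1 - l) * (l * q) \<le> (1 - l) * (Gf (K v) + rv)"
        using m pi' gw unfolding q_def by (simp add: algebra_simps)
      hence "(1 - l) * (Gf (K u) + ru + l * q) \<le> (1 - l) * (Gf (K v) + rv)"
        by (simp add: algebra_simps)
      hence "Gf (K u) + ru + l * q \<le> Gf (K v) + rv" using l by simp
      thus ?thesis by simp
    qed
    have "q \<le> (Gf (K v) + rv) - (Gf (K u) + ru)"
      by (rule field_le_mult_one_interval) (rule lin)
    hence A: "ereal q \<le> J \<alpha> v (K v) - J \<alpha> u (K u)" using Jv Ju by simp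
    have "J \<alpha> v (K v) - J \<alpha> u (K u) = ereal rv + ereal (P u (Kstar gs) - ru) + ereal (Gf (K v)) + ereal (inner (- gs) (K u) - Gf (K u))"
      using Jv Ju key by (simp add: algebra_simps)
    also have "\<dots> \<le> R \<alpha> v + fenchel P (R \<alpha>) (Kstar gs) + G (K v) + fenchel_H G (- gs)"
      using f1 f2 real by (intro add_mono) (auto simp: G_def Gf_def)
    finally show ?thesis using A unfolding q_def by simp
  qed
qed

end
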